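(* Let $N\ge1$, $h=\frac{2\pi}{2N+1}$, $x_\nu=\nu h$ ($\nu=0,\dots,2N$), and let $u_N(x,t)=\sum_{|k|\le N}\widehat u_k(t)e^{ikx}$ solve the $2/3$ de-aliasing pseudo-spectral Fourier method for Burgers' equation, $$\partial_t u_N(x,t)+\tfrac12\partial_x\Big(I_N\big[(\mathcal S u_N)^2\big]\Big)(x,t)=0,\qquad x\in[0,2\pi),$$ where $\mathcal S u_N:=\sum_{|k|\le \frac23 N}\sigma_k\widehat u_k(t)e^{ikx}$. Then the smoothed solution $u_m:=\mathcal S u_N$ (a trigonometric polynomial of degree $m:=\frac23N$) satisfies $$\partial_t u_m(x,t)+\tfrac12\partial_x\,\mathcal S[u_m^2](x,t)=0,$$ where for a $2\pi$-periodic $w$, $\mathcal S w=\sum_{|k|\le m}\sigma_k\widehat w_k e^{ikx}$.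
   Context: $I_N[w]$ denotes the trigonometric interpolant of degree $N$ of a $2\pi$-periodic function $w$ at the $2N+1$ equispaced points $x_\nu$: $I_N[w](x)=\sum_{|k|\le N}\widetilde w(k)e^{ikx}$ with $\widetilde w(k)=\frac{h}{2\pi}\sum_{\nu=0}^{2N}w(x_\nu)e^{-ikx_\nu}$. The smoothing factors satisfy $\sigma_k\in[0,1]$, $\sigma_k=1$ for $|k|\le N/3$, and $\sigma_k=0$ for $|k|>\frac23N$ (e.g. $\sigma_k=\sigma(|k|/N)$ with a smooth mollifier $\sigma\equiv1$ on $[0,\frac13]$, $\sigma\in(0,1)$ on $(\frac13,\frac23)$, $\sigma\equiv0$ on $[\frac23,1]$). $\widehat w_k$ denotes the $k$-th Fourier coefficient. *)

theory Defs
  imports "HOL-Analysis.Analysis"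
begin

definition trig_poly :: "nat \<Rightarrow> (int \<Rightarrow> complex) \<Rightarrow> real \<Rightarrow> complex" where
  "trig_poly N c x = (\<Sum>k\<in>{-int N..int N}. c k * exp (\<i> * of_int k * of_real x))"

definition mesh :: "nat \<Rightarrow> real" where
  "mesh N = 2 * pi / (2 * real N + 1)"

definition gridpt :: "nat \<Rightarrow> nat \<Rightarrow> real" where
  "gridpt N \<nu> = real \<nu> * mesh N"

definition interp_coeff :: "nat \<Rightarrow> (real \<Rightarrow> complex) \<Rightarrow> int \<Rightarrow> complex" where
  "interp_coeff N w k = of_real (mesh N / (2 * pi)) *
     (\<Sum>\<nu>\<in>{0..2*N}. w (gridpt N \<nu>) * exp (- \<i> * of_int k * of_real (gridpt N \<nu>)))"

definition interp :: "nat \<Rightarrow> (real \<Rightarrow> complex) \<Rightarrow> real \<Rightarrow> complex" where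
  "interp N w = trig_poly N (interp_coeff N w)"

definition fourier_coeff :: "(real \<Rightarrow> complex) \<Rightarrow> int \<Rightarrow> complex" where
  "fourier_coeff w k = of_real (1 / (2 * pi)) *
     integral {0..2*pi} (\<lambda>x. w x * exp (- \<i> * of_int k * of_real x))"

definition smoothing_factors :: "nat \<Rightarrow> (int \<Rightarrow> real) \<Rightarrow> bool" where
  "smoothing_factors N \<sigma> \<longleftrightarrow>
     (\<forall>k. 0 \<le> \<sigma> k \<and> \<sigma> k \<le> 1) \<and>
     (\<forall>k. real_of_int \<bar>k\<bar> \<le> real N / 3 \<longrightarrow> \<sigma> k = 1) \<and>
     (\<forall>k. real_of_int \<bar>k\<bar> > 2 * real N / 3 \<longrightarrow> \<sigma> k = 0)"

definition smooth_range :: "nat \<Rightarrow> int set" where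
  "smooth_range N = {k. real_of_int \<bar>k\<bar> \<le> 2 * real N / 3}"

definition smooth_coeffs :: "nat \<Rightarrow> (int \<Rightarrow> real) \<Rightarrow> (int \<Rightarrow> complex) \<Rightarrow> real \<Rightarrow> complex" where
  "smooth_coeffs N \<sigma> c x =
     (\<Sum>k\<in>smooth_range N. of_real (\<sigma> k) * c k * exp (\<i> * of_int k * of_real x))"

definition smooth_fun :: "nat \<Rightarrow> (int \<Rightarrow> real) \<Rightarrow> (real \<Rightarrow> complex) \<Rightarrow> real \<Rightarrow> complex" where
  "smooth_fun N \<sigma> w x = smooth_coeffs N \<sigma> (fourier_coeff w) x"

end

theory Submission
  imports Defs
begin

definition E :: "int \<Rightarrow> real \<Rightarrow> complex" where
  "E n x = exp (\<i> * of_int n * of_real x)"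

lemma E_deriv: "((E n) has_vector_derivative (\<i> * of_int n * E n x)) (at x within S)"
proof -
  have "((\<lambda>z. exp (\<i> * of_int n * z)) has_field_derivative (exp (\<i> * of_int n * of_real x) * (\<i> * of_int n))) (at (of_real x))"
    by (auto intro!: derivative_eq_intros)
  from has_vector_derivative_real_field[OF this] show ?thesis
    by (simp add: E_def[abs_def] mult.commute)
qed

lemma E_mult: "E a x * E b x = E (a + b) x"
  by (simp add: E_def exp_add[symmetric] algebra_simps)

lemma E_zero[simp]: "E 0 x = 1" by (simp add: E_def)
lemma E_zero_fun: "E 0 = (\<lambda>x. 1)" by (simp add: E_def[abs_def])
lemma E_at0[simp]: "E n 0 = 1" by (simp add: E_def)

lemma E_2pi: "E n (2*pi) = 1"
proof -
  have "E n (2*pi) = exp ((2 * of_int n * pi) * \<i>)" by (simp add: E_def algebra_simps)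
  also have "\<dots> = 1" by (rule exp_integer_2pi) simp
  finally show ?thesis .
qed

lemma E_integral: "((E d) has_integral (if d = 0 then of_real (2*pi) else 0)) {0..2*pi}"
proof (cases "d = 0")
  case True
  then show ?thesis using has_integral_const_real[of "1::complex" 0 "2*pi"]
    by (simp add: scaleR_conv_of_real E_zero_fun)
next
  case False
  have "((\<lambda>x. E d x / (\<i> * of_int d)) has_vector_derivative E d x) (at x within {0..2*pi})" for x
    using has_vector_derivative_divide[OF E_deriv[of d x "{0..2*pi}"], of "\<i> * of_int d"] False
    by simp
  from fundamental_theorem_of_calculus[OF _ this] False show ?thesis
    by (simp add: E_2pi)
qed

lemma disc_orth:
  assumes "\<bar>d\<bar> \<le> 2 * int N"
  shows "(\<Sum>\<nu>\<in>{0..2*N}. E d (gridpt N \<nu>)) = (if d = 0 then of_nat (2*N+1) else 0)"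
proof (cases "d = 0")
  case True then show ?thesis by simp
next
  case False
  define q where "q = exp (\<i> * of_int d * of_real (mesh N))"
  have hq: "E d (gridpt N \<nu>) = q ^ \<nu>" for \<nu>
  proof -
    have "E d (gridpt N \<nu>) = exp (of_nat \<nu> * (\<i> * of_int d * of_real (mesh N)))"
      by (simp add: E_def gridpt_def algebra_simps)
    then show ?thesis by (simp add: exp_of_nat_mult q_def)
  qed
  have mesh: "real (2*N+1) * mesh N = 2 * pi" by (simp add: mesh_def add.commute)
  have q1: "q ^ (2*N+1) = 1"
  proof -
    have "q ^ (2*N+1) = exp (of_nat (2*N+1) * (\<i> * of_int d * of_real (mesh N)))"
      unfolding q_def by (rule exp_of_nat_mult[symmetric])
    also have "\<dots> = E d (real (2*N+1) * mesh N)"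
      unfolding E_def by (simp only: of_real_mult of_real_of_nat_eq ac_simps)
    also have "\<dots> = 1" using mesh E_2pi by simp
    finally show ?thesis .
  qed
  have qn1: "q \<noteq> 1"
  proof
    assume "q = 1"
    then obtain n :: int where n: "real_of_int d * mesh N = of_int (2*n) * pi"
      unfolding q_def exp_eq_1 by auto
    then have "real_of_int d * (2 * pi) = of_int (2*n) * pi * real (2*N+1)"
      using mesh by (metis mult.assoc mult.commute)
    then have "real_of_int d = of_int n * real (2*N+1)" by simp
    then have dn: "d = n * int (2*N+1)" by (metis of_int_eq_iff of_int_mult of_int_of_nat_eq)
    then have "n \<noteq> 0" using False by auto
    then have "\<bar>d\<bar> \<ge> int (2*N+1)" unfolding dn abs_mult
      by (simp add: abs_ge_self mult_le_cancel_right1)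
    then show False using assms by simp
  qed
  have "(\<Sum>\<nu>\<in>{0..2*N}. E d (gridpt N \<nu>)) = (\<Sum>\<nu><2*N+1. q ^ \<nu>)"
    by (simp add: hq atLeast0AtMost lessThan_Suc_atMost)
  also have "\<dots> = (1 - q ^ (2*N+1)) / (1 - q)"
    by (rule trans[OF sum_gp_strict]) (simp add: qn1)
  also have "\<dots> = 0" by (simp only: q1) simp
  finally show ?thesis using False by simp
qed

lemma E_neg: "exp (- \<i> * of_int k * of_real x) = E (-k) x"
  by (simp add: E_def)

lemma interp_coeff_sum:
  assumes "finite I" and "\<And>i. i \<in> I \<Longrightarrow> \<bar>f i - k\<bar> \<le> 2 * int N"
  shows "interp_coeff N (\<lambda>x. \<Sum>i\<in>I. b i * E (f i) x) k = (\<Sum>i\<in>I. if f i = k then b i else 0)"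
proof -
  have "interp_coeff N (\<lambda>x. \<Sum>i\<in>I. b i * E (f i) x) k =
     of_real (mesh N / (2 * pi)) * (\<Sum>\<nu>\<in>{0..2*N}. \<Sum>i\<in>I. b i * E (f i - k) (gridpt N \<nu>))"
    unfolding interp_coeff_def E_neg
    by (simp add: sum_distrib_right mult.assoc E_mult)
  also have "\<dots> = of_real (mesh N / (2 * pi)) * (\<Sum>i\<in>I. b i * (\<Sum>\<nu>\<in>{0..2*N}. E (f i - k) (gridpt N \<nu>)))"
    by (simp add: sum.swap[of _ "{0..2*N}"] sum_distrib_left)
  also have "\<dots> = of_real (mesh N / (2 * pi)) * (\<Sum>i\<in>I. b i * (if f i = k then of_nat (2*N+1) else 0))"
    using assms(2) by (simp add: disc_orth)
  also have "\<dots> = (\<Sum>i\<in>I. if f i = k then b i else 0)"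
    unfolding sum_distrib_left
  proof (rule sum.cong[OF refl])
    fix i
    have "complex_of_real (mesh N / (2 * pi)) * of_nat (2*N+1) = 1"
    proof -
      have "mesh N / (2 * pi) * real (2*N+1) = 1" by (simp add: mesh_def add.commute)
      then show ?thesis by (metis of_real_1 of_real_mult of_real_of_nat_eq)
    qed
    then show "complex_of_real (mesh N / (2 * pi)) * (b i * (if f i = k then of_nat (2*N+1) else 0)) = (if f i = k then b i else 0)"
      by (simp add: algebra_simps)
  qed
  finally show ?thesis .
qed

lemma fourier_coeff_sum:
  assumes "finite I"
  shows "fourier_coeff (\<lambda>x. \<Sum>i\<in>I. b i * E (f i) x) k = (\<Sum>i\<in>I. if f i = k then b i else 0)"
proof -
  have "((\<lambda>x. \<Sum>i\<in>I. b i * E (f i - k) x) has_integral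
        (\<Sum>i\<in>I. b i * (if f i - k = 0 then of_real (2*pi) else 0))) {0..2*pi}"
    by (rule has_integral_sum[OF assms]) (intro has_integral_mult_right E_integral)
  moreover have "(\<lambda>x. (\<Sum>i\<in>I. b i * E (f i) x) * exp (- \<i> * of_int k * of_real x)) =
      (\<lambda>x. \<Sum>i\<in>I. b i * E (f i - k) x)"
    unfolding E_neg by (simp add: sum_distrib_right mult.assoc E_mult)
  ultimately show ?thesis
    unfolding fourier_coeff_def by (simp add: integral_unique sum_distrib_left if_distrib cong: if_cong)
qed

lemma trig_deriv: "finite K \<Longrightarrow> ((\<lambda>y. \<Sum>k\<in>K. c k * E k y) has_vector_derivative (\<Sum>k\<in>K. c k * (\<i> * of_int k * E k x))) (at x)"
  by (intro has_vector_derivative_sum has_vector_derivative_mult_right E_deriv)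

lemma time_deriv:
  assumes "finite K" "\<And>k. k \<in> K \<Longrightarrow> ((\<lambda>s. u s k) has_vector_derivative D k) (at t)"
  shows "((\<lambda>s. \<Sum>k\<in>K. c k * u s k * E k x) has_vector_derivative (\<Sum>k\<in>K. c k * D k * E k x)) (at t)"
  using assms by (intro has_vector_derivative_sum has_vector_derivative_mult_right has_vector_derivative_mult_left) auto

lemma trig_poly_E: "trig_poly N c = (\<lambda>y. \<Sum>k\<in>{-int N..int N}. c k * E k y)"
  by (simp add: trig_poly_def[abs_def] E_def[abs_def])

lemma smooth_coeffs_E: "smooth_coeffs N \<sigma> c = (\<lambda>y. \<Sum>k\<in>smooth_range N. of_real (\<sigma> k) * c k * E k y)"
  by (simp add: smooth_coeffs_def[abs_def] E_def[abs_def])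

lemma SR_sub: "smooth_range N \<subseteq> {-int N..int N}"
proof
  fix k assume "k \<in> smooth_range N"
  then have "real_of_int \<bar>k\<bar> \<le> real N" unfolding smooth_range_def by simp
  then have "\<bar>k\<bar> \<le> int N" by linarith
  then show "k \<in> {-int N..int N}" by auto
qed

lemma SR_fin: "finite (smooth_range N)"
  using SR_sub finite_subset by blast

lemma SR_bound:
  assumes "j \<in> smooth_range N" "l \<in> smooth_range N" "k \<in> smooth_range N"
  shows "\<bar>j + l - k\<bar> \<le> 2 * int N"
proof -
  have "real_of_int \<bar>j + l - k\<bar> \<le> real_of_int \<bar>j\<bar> + real_of_int \<bar>l\<bar> + real_of_int \<bar>k\<bar>" by linarith
  also have "\<dots> \<le> 2 * real N" using assms unfolding smooth_range_def by simp
  finally show ?thesis by linarith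
qed

lemma square_E:
  fixes a :: "int \<Rightarrow> complex"
  shows "(\<Sum>k\<in>K. a k * E k z)^2 = (\<Sum>p\<in>K \<times> K. (a (fst p) * a (snd p)) * E (fst p + snd p) z)"
  by (simp add: power2_eq_square sum_product sum.cartesian_product E_mult[symmetric] algebra_simps split_beta)

theorem corollary3p2:
  fixes N :: nat and \<sigma> :: "int \<Rightarrow> real"
    and uhat :: "real \<Rightarrow> int \<Rightarrow> complex" and T :: "real set"
  assumes "N \<ge> 1"
    and "smoothing_factors N \<sigma>"
    and "open T"
    and "\<And>k t. t \<in> T \<Longrightarrow> (\<lambda>s. uhat s k) differentiable (at t)"
    and "\<And>x t. t \<in> T \<Longrightarrow>
           vector_derivative (\<lambda>s. trig_poly N (uhat s) x) (at t)
           + 1/2 * vector_derivative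
               (\<lambda>y. interp N (\<lambda>z. (smooth_coeffs N \<sigma> (uhat t) z)^2) y) (at x) = 0"
  shows "\<And>x t. t \<in> T \<Longrightarrow>
           vector_derivative (\<lambda>s. smooth_coeffs N \<sigma> (uhat s) x) (at t)
           + 1/2 * vector_derivative
               (\<lambda>y. smooth_fun N \<sigma> (\<lambda>z. (smooth_coeffs N \<sigma> (uhat t) z)^2) y) (at x) = 0"
proof -
  fix x t assume tT: "t \<in> T"
  define SR where "SR = smooth_range N"
  define K where "K = {-int N..int N}"
  have finSR: "finite SR" and finK: "finite K" using SR_fin by (auto simp: SR_def K_def)
  have SRK: "SR \<subseteq> K" using SR_sub by (simp add: SR_def K_def)
  define D where "D k = vector_derivative (\<lambda>s. uhat s k) (at t)" for k
  have hD: "((\<lambda>s. uhat s k) has_vector_derivative D k) (at t)" for k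
    using assms(4)[OF tT] vector_derivative_works unfolding D_def by blast
  define a where "a k = of_real (\<sigma> k) * uhat t k" for k
  define w where "w = (\<lambda>z. (smooth_coeffs N \<sigma> (uhat t) z)^2)"
  define b where "b p = a (fst p) * a (snd p)" for p :: "int \<times> int"
  have w_eq: "w = (\<lambda>z. \<Sum>p\<in>SR \<times> SR. b p * E (fst p + snd p) z)"
    unfolding w_def smooth_coeffs_E b_def SR_def[symmetric]
    by (simp add: a_def[symmetric] mult.assoc[symmetric] square_E)
  have coeq: "interp_coeff N w k = fourier_coeff w k" if k: "k \<in> SR" for k
  proof -
    have "interp_coeff N w k = (\<Sum>p\<in>SR \<times> SR. if fst p + snd p = k then b p else 0)"
      unfolding w_eq
      by (rule interp_coeff_sum) (use finSR k SR_bound in \<open>auto simp: SR_def\<close>)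
    also have "\<dots> = fourier_coeff w k"
      unfolding w_eq by (rule fourier_coeff_sum[symmetric]) (use finSR in simp)
    finally show ?thesis .
  qed
  define cI where "cI = interp_coeff N w"
  define bb where "bb k = D k + 1/2 * (cI k * (\<i> * of_int k))" for k
  have hyp0: "(\<Sum>k\<in>K. bb k * E k y) = 0" for y
  proof -
    have "vector_derivative (\<lambda>s. trig_poly N (uhat s) y) (at t) = (\<Sum>k\<in>K. 1 * D k * E k y)"
      unfolding trig_poly_E K_def[symmetric]
      by (rule vector_derivative_at) (use time_deriv[OF finK hD, of "\<lambda>_. 1"] in simp)
    moreover have "vector_derivative (\<lambda>y. interp N w y) (at y) = (\<Sum>k\<in>K. cI k * (\<i> * of_int k * E k y))"
      unfolding interp_def trig_poly_E K_def[symmetric] cI_def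
      by (rule vector_derivative_at) (rule trig_deriv[OF finK])
    ultimately show ?thesis
      using assms(5)[OF tT, of y] unfolding w_def[symmetric] bb_def
      by (simp add: sum.distrib sum_distrib_left algebra_simps)
  qed
  have bb0: "bb l = 0" if l: "l \<in> K" for l
  proof -
    have "interp_coeff N (\<lambda>y. \<Sum>k\<in>K. bb k * E k y) l = (\<Sum>k\<in>K. if k = l then bb k else 0)"
      by (rule interp_coeff_sum[where f = "\<lambda>k. k", OF finK]) (use l in \<open>auto simp: K_def\<close>)
    also have "\<dots> = bb l" using l finK by simp
    finally show ?thesis using hyp0 by (simp add: interp_coeff_def)
  qed
  have "vector_derivative (\<lambda>s. smooth_coeffs N \<sigma> (uhat s) x) (at t) = (\<Sum>k\<in>SR. of_real (\<sigma> k) * D k * E k x)"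
    unfolding smooth_coeffs_E SR_def[symmetric]
    by (rule vector_derivative_at) (rule time_deriv[OF finSR hD])
  moreover have "vector_derivative (\<lambda>y. smooth_fun N \<sigma> w y) (at x) =
      (\<Sum>k\<in>SR. of_real (\<sigma> k) * fourier_coeff w k * (\<i> * of_int k * E k x))"
  proof -
    have "smooth_fun N \<sigma> w = (\<lambda>y. \<Sum>k\<in>SR. (of_real (\<sigma> k) * fourier_coeff w k) * E k y)"
      unfolding smooth_fun_def[abs_def] smooth_coeffs_E SR_def by simp
    then show ?thesis
      by (simp add: vector_derivative_at[OF trig_deriv[OF finSR]])
  qed
  moreover have "(\<Sum>k\<in>SR. of_real (\<sigma> k) * D k * E k x) + 1/2 *
      (\<Sum>k\<in>SR. of_real (\<sigma> k) * fourier_coeff w k * (\<i> * of_int k * E k x)) = 0"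
  proof -
    have "of_real (\<sigma> k) * D k * E k x + 1/2 * (of_real (\<sigma> k) * fourier_coeff w k * (\<i> * of_int k * E k x)) = 0"
      if k: "k \<in> SR" for k
    proof -
      have "bb k = 0" using bb0 SRK k by auto
      then have "D k = - (1/2 * (cI k * (\<i> * of_int k)))" unfolding bb_def by (simp add: eq_neg_iff_add_eq_0)
      moreover have "cI k = fourier_coeff w k" using coeq[OF k] by (simp add: cI_def)
      ultimately show ?thesis by (simp add: algebra_simps)
    qed
    then have "(\<Sum>k\<in>SR. of_real (\<sigma> k) * D k * E k x + 1/2 * (of_real (\<sigma> k) * fourier_coeff w k * (\<i> * of_int k * E k x))) = 0"
      by simp
    then show ?thesis by (simp add: sum.distrib sum_distrib_left)
  qed
  ultimately show "vector_derivative (\<lambda>s. smooth_coeffs N \<sigma> (uhat s) x) (at t)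
           + 1/2 * vector_derivative
               (\<lambda>y. smooth_fun N \<sigma> (\<lambda>z. (smooth_coeffs N \<sigma> (uhat t) z)^2) y) (at x) = 0"
    unfolding w_def by simp
qed

end
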